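(* Let $q$ be a power of an odd prime, let $E$ be an elliptic curve over $\mathbb{F}_q$ with a rational point $O$, and let $D\subset E(\mathbb{F}_q)\setminus\{O\}$ be a set of rational points with $n=|D|$. For an integer $k$ with $2\leq k\leq n-2$, let $C$ be either $C_{\Omega}(D,kO)$ or $C_{\mathcal{L}}(D,kO)$. Then the covering radius of $C$ equals either $n-\dim(C)-1$ or $n-\dim(C)$.
   Context: An elliptic curve $E$ over $\mathbb{F}_q$ is a geometrically irreducible smooth projective curve of genus $1$; $E(\mathbb{F}_q)$ denotes its rational points. For a divisor $V$, $\mathcal{L}(V)=\{f\in\mathbb{F}_q(E)^*:\mathrm{div}(f)\geq -V\}\cup\{0\}$ and $\Omega(V)$ is the space of Weil differentials $\omega$ with $\mathrm{div}(\omega)\geq V$, together with $0$. For $D=\{P_1,\dots,P_n\}\subset E(\mathbb{F}_q)$ (also viewed as the divisor $P_1+\dots+P_n$) and a divisor $G$ with support disjoint from $D$: $C_{\mathcal{L}}(D,G)=\{(f(P_1),\dots,f(P_n)):f\in\mathcal{L}(G)\}$ and $C_{\Omega}(D,G)=\{(\mathrm{res}_{P_1}(\omega),\dots,\mathrm{res}_{P_n}(\omega)):\omega\in\Omega(G-D)\}$; these two codes are dual to each other. The covering radius of a linear code $C\subseteq\mathbb{F}_q^n$ is $\rho(C)=\max_{u\in\mathbb{F}_q^n}\min_{c\in C}d(u,c)$, where $d$ is the Hamming distance. *)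

theory Defs
  imports "HOL-Analysis.Analysis"
begin

text \<open>Elliptic curves are given by a (general) Weierstrass equation
  y^2 + a1 x y + a3 y = x^3 + a2 x^2 + a4 x + a6 with nonzero discriminant;
  the distinguished rational point O is the point at infinity. Every elliptic
  curve E over F_q with a rational point O has such a model with O at infinity.\<close>

record 'a weierstrass =
  wa1 :: 'a
  wa2 :: 'a
  wa3 :: 'a
  wa4 :: 'a
  wa6 :: 'a

definition discr :: "'a::comm_ring_1 weierstrass \<Rightarrow> 'a" where
  "discr W = (let a1 = wa1 W; a2 = wa2 W; a3 = wa3 W; a4 = wa4 W; a6 = wa6 W;
      b2 = a1^2 + 4*a2; b4 = 2*a4 + a1*a3; b6 = a3^2 + 4*a6;
      b8 = a1^2*a6 + 4*a2*a6 - a1*a3*a4 + a2*a3^2 - a4^2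
    in - (b2^2*b8) - 8*b4^3 - 27*b6^2 + 9*b2*b4*b6)"

definition elliptic :: "'a::field weierstrass \<Rightarrow> bool" where
  "elliptic W \<longleftrightarrow> discr W \<noteq> 0"

text \<open>Affine rational points, i.e. rational points of E other than O.\<close>
definition on_curve :: "'a::comm_ring_1 weierstrass \<Rightarrow> 'a \<times> 'a \<Rightarrow> bool" where
  "on_curve W P \<longleftrightarrow> (case P of (x, y) \<Rightarrow>
     y^2 + wa1 W * x * y + wa3 W * y = x^3 + wa2 W * x^2 + wa4 W * x + wa6 W)"

text \<open>Monomials x^i y^j (j \<le> 1) with pole order 2i+3j \<le> k at O: a basis of L(kO).\<close>
definition LkO_monomials :: "nat \<Rightarrow> (nat \<times> nat) set" where
  "LkO_monomials k = {(i, j). j \<le> 1 \<and> 2*i + 3*j \<le> k}"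

text \<open>The evaluation code C_L(D, kO), D given as an injective enumeration P of its points.\<close>
definition code_L :: "('n::finite \<Rightarrow> 'a::field \<times> 'a) \<Rightarrow> nat \<Rightarrow> ('a ^ 'n) set" where
  "code_L P k = {(\<chi> i. \<Sum>(a, b)\<in>LkO_monomials k. c (a, b) * fst (P i) ^ a * snd (P i) ^ b)
                  | c. True}"

definition dot :: "'a::comm_ring_1 ^ 'n::finite \<Rightarrow> 'a ^ 'n \<Rightarrow> 'a" where
  "dot u v = (\<Sum>i\<in>UNIV. u $ i * v $ i)"

definition dual_code :: "('a::field ^ 'n::finite) set \<Rightarrow> ('a ^ 'n) set" where
  "dual_code C = {u. \<forall>c\<in>C. dot u c = 0}"

text \<open>The residue code C_Omega(D, kO), realised as the dual of C_L(D, kO).\<close>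
definition code_Omega :: "('n::finite \<Rightarrow> 'a::field \<times> 'a) \<Rightarrow> nat \<Rightarrow> ('a ^ 'n) set" where
  "code_Omega P k = dual_code (code_L P k)"

definition hamming :: "'a ^ 'n::finite \<Rightarrow> 'a ^ 'n \<Rightarrow> nat" where
  "hamming u v = card {i. u $ i \<noteq> v $ i}"

definition covering_radius :: "('a::finite ^ 'n::finite) set \<Rightarrow> nat" where
  "covering_radius C = Max (range (\<lambda>u. Min ((hamming u) ` C)))"

end

theory Submission
  imports Defs "HOL-Computational_Algebra.Polynomial" "HOL-Computational_Algebra.Polynomial_Factorial"
begin

lemma discr_translate:
  fixes a1 a2 a3 a4 a6 r t :: "'a::field"
  shows "discr \<lparr>wa1 = a1, wa2 = a2, wa3 = a3, wa4 = a4, wa6 = a6\<rparr> =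
         discr \<lparr>wa1 = a1, wa2 = a2 + 3*r, wa3 = a3 + r*a1 + 2*t,
                wa4 = a4 + 2*r*a2 - t*a1 + 3*r^2,
                wa6 = a6 + r*a4 + r^2*a2 + r^3 - t*a3 - t^2 - r*t*a1\<rparr>"
  unfolding discr_def Let_def weierstrass.select_convs by algebra

lemma smooth_2tors:
  fixes W :: "'a::field weierstrass"
  assumes "elliptic W" "on_curve W (x0, y0)" "2*y0 + wa1 W*x0 + wa3 W = 0"
  shows "wa1 W * y0 - (3*x0^2 + 2*wa2 W*x0 + wa4 W) \<noteq> 0"
proof
  assume h: "wa1 W * y0 - (3*x0^2 + 2*wa2 W*x0 + wa4 W) = 0"
  obtain a1 a2 a3 a4 a6 where W: "W = \<lparr>wa1 = a1, wa2 = a2, wa3 = a3, wa4 = a4, wa6 = a6\<rparr>"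
    by (cases W) auto
  have c: "y0^2 + a1*x0*y0 + a3*y0 = x0^3 + a2*x0^2 + a4*x0 + a6"
    using assms(2) by (simp add: on_curve_def W)
  have e3: "a3 + x0*a1 + 2*y0 = 0" using assms(3) by (simp add: W algebra_simps)
  have e4: "a4 + 2*x0*a2 - y0*a1 + 3*x0^2 = 0" using h by (simp add: W algebra_simps)
  have e6: "a6 + x0*a4 + x0^2*a2 + x0^3 - y0*a3 - y0^2 - x0*y0*a1 = 0"
    using c by (simp add: algebra_simps)
  have "discr W = 0"
    unfolding W discr_translate[of a1 a2 a3 a4 a6 x0 y0] e3 e4 e6
    by (simp add: discr_def Let_def)
  then show False using assms(1) by (simp add: elliptic_def)
qed

definition hp :: "'a::field weierstrass \<Rightarrow> 'a poly" where
  "hp W = [:wa3 W, wa1 W:]"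
definition Fp :: "'a::field weierstrass \<Rightarrow> 'a poly" where
  "Fp W = [:wa6 W, wa4 W, wa2 W, 1:]"

type_synonym 'a fn = "'a poly \<times> 'a poly"

fun fmul :: "'a::field weierstrass \<Rightarrow> 'a fn \<Rightarrow> 'a fn \<Rightarrow> 'a fn" where
  "fmul W (A, B) (C, D) = (A*C + B*D*Fp W, A*D + B*C - B*D*hp W)"
fun fconj :: "'a::field weierstrass \<Rightarrow> 'a fn \<Rightarrow> 'a fn" where
  "fconj W (A, B) = (A - B*hp W, -B)"
fun fnorm :: "'a::field weierstrass \<Rightarrow> 'a fn \<Rightarrow> 'a poly" where
  "fnorm W (A, B) = A*A - hp W*A*B - Fp W*B*B"
fun evf :: "'a::field fn \<Rightarrow> 'a \<times> 'a \<Rightarrow> 'a" where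
  "evf (A, B) (x, y) = poly A x + poly B x * y"
fun cpt :: "'a::field weierstrass \<Rightarrow> 'a \<times> 'a \<Rightarrow> 'a \<times> 'a" where
  "cpt W (x, y) = (x, - y - poly (hp W) x)"

lemma poly_hp: "poly (hp W) x = wa1 W * x + wa3 W"
  by (simp add: hp_def algebra_simps)
lemma poly_Fp: "poly (Fp W) x = x^3 + wa2 W * x^2 + wa4 W * x + wa6 W"
  by (simp add: Fp_def algebra_simps power2_eq_square power3_eq_cube)

lemma on_curve_iff: "on_curve W (x, y) \<longleftrightarrow> y*y + poly (hp W) x * y = poly (Fp W) x"
  by (simp add: on_curve_def poly_hp poly_Fp algebra_simps power2_eq_square)

lemma cpt_on_curve: "on_curve W z \<Longrightarrow> on_curve W (cpt W z)"
  by (cases z) (simp add: on_curve_iff algebra_simps)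

lemma cpt_cpt[simp]: "cpt W (cpt W z) = z"
  by (cases z) simp

lemma fst_cpt[simp]: "fst (cpt W z) = fst z"
  by (cases z) simp

lemma evf_fmul:
  assumes "on_curve W z"
  shows "evf (fmul W f g) z = evf f z * evf g z"
proof -
  obtain x y where z: "z = (x, y)" by (cases z)
  obtain A B where f: "f = (A, B)" by (cases f)
  obtain C D where g: "g = (C, D)" by (cases g)
  have c: "y*y = poly (Fp W) x - poly (hp W) x * y" using assms by (simp add: z on_curve_iff algebra_simps)
  have "evf f z * evf g z = poly A x * poly C x + (poly A x * poly D x + poly B x * poly C x) * y + poly B x * poly D x * (y*y)"
    by (simp add: z f g algebra_simps)
  also have "\<dots> = evf (fmul W f g) z" by (simp add: z f g c algebra_simps)
  finally show ?thesis by simp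
qed

lemma evf_fconj: "evf (fconj W f) z = evf f (cpt W z)"
  by (cases f, cases z) (simp add: algebra_simps)

lemma poly_fnorm:
  assumes "on_curve W z"
  shows "poly (fnorm W f) (fst z) = evf f z * evf f (cpt W z)"
proof -
  obtain x y where z: "z = (x, y)" by (cases z)
  obtain A B where f: "f = (A, B)" by (cases f)
  have c: "y*y = poly (Fp W) x - poly (hp W) x * y" using assms by (simp add: z on_curve_iff algebra_simps)
  have "evf f z * evf f (cpt W z) = poly A x * poly A x - poly (hp W) x * poly A x * poly B x
     - poly B x * poly B x * (y * y + poly (hp W) x * y)"
    by (simp add: z f algebra_simps)
  also have "\<dots> = poly (fnorm W f) (fst z)" by (simp add: z f c algebra_simps)
  finally show ?thesis by simp
qed

lemma fnorm_fmul0: "fnorm W (fmul W (A,B) (C,D)) = fnorm W (A,B) * fnorm W (C,D)"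
  by simp algebra
lemma fnorm_fmul: "fnorm W (fmul W f g) = fnorm W f * fnorm W g"
  using fnorm_fmul0[of W "fst f" "snd f" "fst g" "snd g"] by simp

lemma fnorm_fconj0: "fnorm W (fconj W (A,B)) = fnorm W (A,B)"
  by simp algebra
lemma fnorm_fconj: "fnorm W (fconj W f) = fnorm W f"
  using fnorm_fconj0[of W "fst f" "snd f"] by simp

lemma fmul_fconj_self0: "fmul W (A,B) (fconj W (A,B)) = (fnorm W (A,B), 0)"
  by simp algebra
lemma fmul_fconj_self: "fmul W f (fconj W f) = (fnorm W f, 0)"
  using fmul_fconj_self0[of W "fst f" "snd f"] by simp

lemma fmul_assoc0: "fmul W (fmul W (A,B) (C,D)) (E,G) = fmul W (A,B) (fmul W (C,D) (E,G))"
  by simp algebra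
lemma fmul_assoc: "fmul W (fmul W f g) k = fmul W f (fmul W g k)"
  using fmul_assoc0[of W "fst f" "snd f" "fst g" "snd g" "fst k" "snd k"] by simp

lemma fmul_comm0: "fmul W (A,B) (C,D) = fmul W (C,D) (A,B)"
  by (simp add: algebra_simps)
lemma fmul_comm: "fmul W f g = fmul W g f"
  using fmul_comm0[of W "fst f" "snd f" "fst g" "snd g"] by simp

lemma fmul_scal0: "fmul W (N*A, N*B) (C,D) = (N * fst (fmul W (A,B) (C,D)), N * snd (fmul W (A,B) (C,D)))"
  by simp algebra
lemma fmul_scal: "fmul W (N*A, N*B) g = (N * fst (fmul W (A,B) g), N * snd (fmul W (A,B) g))"
  using fmul_scal0[of W N A B "fst g" "snd g"] by simp


fun ordf :: "'a::field fn \<Rightarrow> nat" where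
  "ordf (A, B) = (if B = 0 then 2 * degree A else max (2 * degree A) (2 * degree B + 3))"

lemma degree_Fp: "degree (Fp W) = 3"
  by (simp add: Fp_def)
lemma Fp_nz: "Fp W \<noteq> 0"
  by (simp add: Fp_def)
lemma degree_hp: "degree (hp W) \<le> 1"
  by (simp add: hp_def)

lemma deg_norm0:
  assumes "(A, B) \<noteq> (0, 0)"
  shows "fnorm W (A, B) \<noteq> 0 \<and> degree (fnorm W (A, B)) = ordf (A, B)"
proof (cases "B = 0")
  case True
  then have "A \<noteq> 0" using assms by auto
  then show ?thesis using True by (simp add: degree_mult_eq)
next
  case Bnz: False
  have dFBB: "degree (Fp W * B * B) = 2 * degree B + 3"
    using Bnz by (simp add: degree_mult_eq Fp_nz degree_Fp)
  have FBBnz: "Fp W * B * B \<noteq> 0" using Bnz by (simp add: Fp_nz)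
  show ?thesis
  proof (cases "A = 0")
    case True
    then show ?thesis using Bnz dFBB FBBnz by simp
  next
    case Anz: False
    have dAA: "degree (A * A) = 2 * degree A" using Anz by (simp add: degree_mult_eq)
    have dhAB: "degree (hp W * A * B) \<le> 1 + degree A + degree B"
    proof -
      have "degree (hp W * A * B) \<le> degree (hp W * A) + degree B" by (rule degree_mult_le)
      moreover have "degree (hp W * A) \<le> degree (hp W) + degree A" by (rule degree_mult_le)
      ultimately show ?thesis using degree_hp[of W] by linarith
    qed
    show ?thesis
    proof (cases "2 * degree A > 2 * degree B + 3")
      case True
      have "degree (hp W * A * B) \<le> 2 * degree A - 1" using dhAB True by linarith
      moreover have "degree (Fp W * B * B) \<le> 2 * degree A - 1" using dFBB True by linarith
      ultimately have "degree (- (hp W * A * B) - Fp W * B * B) \<le> 2 * degree A - 1"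
        by (intro degree_diff_le) auto
      then have "degree (- (hp W * A * B) - Fp W * B * B) < degree (A * A)"
        using dAA True by linarith
      then have "degree (A * A + (- (hp W * A * B) - Fp W * B * B)) = degree (A * A)"
        by (rule degree_add_eq_left)
      moreover have e: "fnorm W (A, B) = A * A + (- (hp W * A * B) - Fp W * B * B)" by simp
      ultimately have dN: "degree (fnorm W (A, B)) = 2 * degree A" using dAA by (simp only: e)
      have nz: "fnorm W (A, B) \<noteq> 0"
      proof
        assume "fnorm W (A, B) = 0"
        with dN True show False by (simp del: fnorm.simps)
      qed
      show ?thesis using nz dN True Bnz by (simp del: fnorm.simps)
    next
      case False
      have "degree (A * A - hp W * A * B) < degree (- (Fp W * B * B))"
      proof -
        have "degree (hp W * A * B) \<le> 2 * degree B + 2" using dhAB False by presburger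
        moreover have "degree (A * A) \<le> 2 * degree B + 2" using dAA False by presburger
        ultimately have "degree (A * A - hp W * A * B) \<le> 2 * degree B + 2"
          by (intro degree_diff_le) auto
        then show ?thesis using dFBB by simp
      qed
      then have "degree (- (Fp W * B * B) + (A * A - hp W * A * B)) = degree (- (Fp W * B * B))"
        by (rule degree_add_eq_left)
      moreover have e: "fnorm W (A, B) = - (Fp W * B * B) + (A * A - hp W * A * B)" by simp
      ultimately have dN: "degree (fnorm W (A, B)) = 2 * degree B + 3" using dFBB by (simp only: e degree_minus)
      have nz: "fnorm W (A, B) \<noteq> 0"
      proof
        assume "fnorm W (A, B) = 0"
        with dN show False by (simp del: fnorm.simps)
      qed
      show ?thesis using nz dN False Bnz by (simp del: fnorm.simps)
    qed
  qed
qed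

lemma fiber:
  assumes "on_curve W (x, y1)" "on_curve W (x, y2)"
  shows "y2 = y1 \<or> y2 = - y1 - poly (hp W) x"
proof -
  have "(y2 - y1) * (y2 + y1 + poly (hp W) x) = 0"
    using assms by (simp add: on_curve_iff algebra_simps)
  then consider "y2 - y1 = 0" | "y2 + y1 + poly (hp W) x = 0" by auto
  then show ?thesis
  proof cases
    case 1 then show ?thesis by simp
  next
    case 2
    have "y2 = - y1 - poly (hp W) x" using 2 by algebra
    then show ?thesis by simp
  qed
qed

definition mlt :: "('a \<times> 'a) set \<Rightarrow> 'a \<Rightarrow> nat" where
  "mlt Z x = card {z\<in>Z. fst z = x}"

definition PiZ :: "('a::field \<times> 'a) set \<Rightarrow> 'a poly" where
  "PiZ Z = (\<Prod>x\<in>fst ` Z. [:-x, 1:] ^ mlt Z x)"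

lemma fiber_sub:
  assumes "\<forall>z\<in>Z. on_curve W z" "z \<in> Z"
  shows "{z'\<in>Z. fst z' = fst z} \<subseteq> {z, cpt W z}"
proof
  fix z' assume "z' \<in> {z'\<in>Z. fst z' = fst z}"
  then have z': "z' \<in> Z" "fst z' = fst z" by auto
  obtain x y where z: "z = (x, y)" by (cases z)
  obtain y' where z'e: "z' = (x, y')" using z'(2) z by (cases z') auto
  have "y' = y \<or> y' = - y - poly (hp W) x"
    using fiber[of W x y y'] assms z'(1) z z'e by auto
  then show "z' \<in> {z, cpt W z}" using z z'e by auto
qed

lemma mlt_cases:
  assumes "finite Z" "\<forall>z\<in>Z. on_curve W z" "x \<in> fst ` Z"
  obtains z where "z \<in> Z" "fst z = x" "mlt Z x = 1"
  | z where "z \<in> Z" "fst z = x" "cpt W z \<in> Z" "cpt W z \<noteq> z" "mlt Z x = 2"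
proof -
  obtain z where z: "z \<in> Z" "fst z = x" using assms(3) by auto
  have sub: "{z'\<in>Z. fst z' = x} \<subseteq> {z, cpt W z}" using fiber_sub[OF assms(2) z(1)] z(2) by simp
  have zin: "z \<in> {z'\<in>Z. fst z' = x}" using z by simp
  show ?thesis
  proof (cases "cpt W z \<in> Z \<and> cpt W z \<noteq> z")
    case True
    then have "{z'\<in>Z. fst z' = x} = {z, cpt W z}" using sub z by auto
    moreover have "z \<noteq> cpt W z" using True by metis
    ultimately have "mlt Z x = 2" by (simp add: mlt_def)
    then show ?thesis using that(2)[OF z] True by blast
  next
    case False
    then have "{z'\<in>Z. fst z' = x} = {z}" using sub zin by auto
    then have "mlt Z x = 1" by (simp add: mlt_def)
    then show ?thesis using that(1)[OF z] by blast
  qed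
qed

lemma mlt_pos: "finite Z \<Longrightarrow> x \<in> fst ` Z \<Longrightarrow> mlt Z x \<noteq> 0"
  unfolding mlt_def by auto

lemma degree_PiZ:
  assumes "finite Z"
  shows "degree (PiZ Z) = card Z"
proof -
  have "degree (PiZ Z) = (\<Sum>x\<in>fst ` Z. degree ([:-x, 1:] ^ mlt Z x))"
    unfolding PiZ_def by (rule degree_prod_eq_sum_degree) auto
  also have "\<dots> = (\<Sum>x\<in>fst ` Z. mlt Z x)"
    by (simp add: degree_linear_power)
  also have "\<dots> = (\<Sum>x\<in>fst ` Z. (\<Sum>z\<in>{z\<in>Z. fst z = x}. 1))"
    by (simp add: mlt_def)
  also have "\<dots> = (\<Sum>z\<in>Z. 1)"
    using sum.image_gen[OF assms, of "\<lambda>_. (1::nat)" fst] by simp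
  finally show ?thesis by simp
qed

lemma lin_power_times_dvd:
  fixes p :: "'a::field poly"
  assumes "[:-x, 1:] ^ a dvd p" "Q dvd p" "poly Q x \<noteq> 0"
  shows "[:-x, 1:] ^ a * Q dvd p"
proof (cases "p = 0")
  case True then show ?thesis by simp
next
  case False
  obtain r where r: "p = Q * r" using assms(2) by (auto elim!: dvdE)
  have Qnz: "Q \<noteq> 0" "r \<noteq> 0" using False r by auto
  have "order x Q = 0" using assms(3) by (simp add: order_root)
  then have "order x p = order x r" using r Qnz by (simp add: order_mult)
  moreover have "a \<le> order x p" using assms(1) False by (simp add: order_divides)
  ultimately have "[:-x, 1:] ^ a dvd r" by (simp add: order_divides)
  then show ?thesis using r by (simp add: mult_dvd_mono mult.commute)
qed

lemma prod_lin_dvd: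
  fixes p :: "'a::field poly"
  assumes "finite X" "\<forall>x\<in>X. [:-x, 1:] ^ e x dvd p"
  shows "(\<Prod>x\<in>X. [:-x, 1:] ^ e x) dvd p"
  using assms
proof (induction X rule: finite_induct)
  case empty then show ?case by simp
next
  case (insert x X)
  have "poly (\<Prod>x\<in>X. [:-x, 1:] ^ e x) x \<noteq> 0"
    using insert.hyps by (auto simp: poly_prod)
  moreover have "(\<Prod>x\<in>X. [:-x, 1:] ^ e x) dvd p" "[:-x, 1:] ^ e x dvd p" using insert by auto
  ultimately have "[:-x, 1:] ^ e x * (\<Prod>x\<in>X. [:-x, 1:] ^ e x) dvd p"
    by (intro lin_power_times_dvd)
  then show ?case using insert.hyps by simp
qed

lemma PiZ_dvd:
  assumes "finite Z" "\<forall>x\<in>fst ` Z. [:-x, 1:] ^ mlt Z x dvd p"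
  shows "PiZ Z dvd p"
  unfolding PiZ_def using assms by (intro prod_lin_dvd) auto

lemma both_zero:
  assumes "evf (A, B) (x, y1) = 0" "evf (A, B) (x, y2) = 0" "y1 \<noteq> y2"
  shows "[:-x, 1:] dvd A" "[:-x, 1:] dvd B"
proof -
  have e1: "poly A x + poly B x * y1 = 0" using assms(1) by simp
  have e2: "poly A x + poly B x * y2 = 0" using assms(2) by simp
  have "poly B x * (y1 - y2) = 0" using e1 e2 by algebra
  then have b: "poly B x = 0" using assms(3) by simp
  then have "poly A x = 0" using assms(1) by simp
  then show "[:-x, 1:] dvd A" "[:-x, 1:] dvd B" using b by (simp_all add: poly_eq_0_iff_dvd)
qed

lemma PiZ_dvd_norm:
  assumes "finite Z" "\<forall>z\<in>Z. on_curve W z" "\<forall>z\<in>Z. evf f z = 0"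
  shows "PiZ Z dvd fnorm W f"
proof (rule PiZ_dvd[OF assms(1)], rule ballI)
  fix x assume x: "x \<in> fst ` Z"
  obtain A B where f: "f = (A, B)" by (cases f)
  show "[:-x, 1:] ^ mlt Z x dvd fnorm W f"
  proof (cases rule: mlt_cases[OF assms(1,2) x])
    case (1 z)
    have "poly (fnorm W f) x = 0" using poly_fnorm[of W z f] 1 assms by auto
    then show ?thesis using 1 by (simp add: poly_eq_0_iff_dvd)
  next
    case (2 z)
    obtain y where z: "z = (x, y)" using 2 by (cases z) auto
    have ne: "y \<noteq> - y - poly (hp W) x" using 2 z by auto
    have "evf (A, B) (x, y) = 0" "evf (A, B) (x, - y - poly (hp W) x) = 0"
      using assms(3) 2 z f by auto
    from both_zero[OF this ne] obtain A' B' where AB: "A = [:-x, 1:] * A'" "B = [:-x, 1:] * B'"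
      by (auto elim!: dvdE)
    have gen: "\<And>q::'a poly. fnorm W (q*A', q*B') = q^2 * (A'*A' - hp W * A' * B' - Fp W * B' * B')"
      by simp algebra
    have "fnorm W f = [:-x, 1:]^2 * (A'*A' - hp W * A' * B' - Fp W * B' * B')"
      unfolding f AB by (rule gen)
    then show ?thesis using 2 by simp
  qed
qed

lemma zero_count:
  assumes "f \<noteq> (0, 0)" "finite Z" "\<forall>z\<in>Z. on_curve W z" "\<forall>z\<in>Z. evf f z = 0"
  shows "card Z \<le> ordf f"
proof -
  obtain A B where f: "f = (A, B)" by (cases f)
  have nz: "fnorm W f \<noteq> 0" and dg: "degree (fnorm W f) = ordf f"
    using deg_norm0[of A B W] assms(1) f by auto
  have "PiZ Z dvd fnorm W f" by (rule PiZ_dvd_norm[OF assms(2-4)])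
  then have "degree (PiZ Z) \<le> degree (fnorm W f)" using nz by (rule dvd_imp_degree_le)
  then show ?thesis using degree_PiZ[OF assms(2)] dg by simp
qed

lemma sq_dvd_pderiv:
  fixes p :: "'a::field poly"
  assumes "[:-x, 1:]^2 dvd p"
  shows "poly (pderiv p) x = 0"
proof -
  obtain r where r: "p = [:-x, 1:]^2 * r" using assms by (auto elim!: dvdE)
  have gen: "\<And>L::'a poly. poly L x = 0 \<Longrightarrow> poly (pderiv (L^2 * r)) x = 0"
    by (simp add: pderiv_mult power2_eq_square)
  show ?thesis unfolding r by (rule gen) simp
qed

lemma pderiv_hp: "pderiv (hp W) = [:wa1 W:]"
  by (simp add: hp_def pderiv_pCons)

lemma poly_pderiv_Fp: "poly (pderiv (Fp W)) x = 3*x^2 + 2*wa2 W*x + wa4 W"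
  by (simp add: Fp_def pderiv_pCons algebra_simps power2_eq_square)

lemma poly_pderiv_fnorm:
  "poly (pderiv (fnorm W (G0, G1))) x =
     2 * poly G0 x * poly (pderiv G0) x
     - (wa1 W * poly G0 x * poly G1 x + poly (hp W) x * (poly (pderiv G0) x * poly G1 x + poly G0 x * poly (pderiv G1) x))
     - ((3*x^2 + 2*wa2 W*x + wa4 W) * poly G1 x * poly G1 x + 2 * poly (Fp W) x * poly G1 x * poly (pderiv G1) x)"
  apply (simp only: fnorm.simps pderiv_diff pderiv_mult pderiv_hp)
  apply (simp add: poly_pderiv_Fp algebra_simps power2_eq_square)
  done

lemma two_tors_zero:
  assumes ell: "elliptic W" and oc: "on_curve W (x, y)" and tt: "- y - poly (hp W) x = y"
    and ev: "poly G0 x + poly G1 x * y = 0"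
    and d: "[:-x, 1:]^2 dvd fnorm W (G0, G1)"
  shows "poly G0 x = 0 \<and> poly G1 x = 0"
proof -
  have t2: "2*y + wa1 W*x + wa3 W = 0" using tt by (simp add: poly_hp algebra_simps mult_2)
  have sm: "wa1 W * y - (3*x^2 + 2*wa2 W*x + wa4 W) \<noteq> 0"
    using smooth_2tors[OF ell oc t2] .
  have "poly (pderiv (fnorm W (G0, G1))) x = 0" using d by (rule sq_dvd_pderiv)
  then have e: "2 * poly G0 x * poly (pderiv G0) x
     - (wa1 W * poly G0 x * poly G1 x + poly (hp W) x * (poly (pderiv G0) x * poly G1 x + poly G0 x * poly (pderiv G1) x))
     - ((3*x^2 + 2*wa2 W*x + wa4 W) * poly G1 x * poly G1 x + 2 * poly (Fp W) x * poly G1 x * poly (pderiv G1) x) = 0"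
    by (simp only: poly_pderiv_fnorm)
  have hx: "poly (hp W) x + 2 * y = 0" using tt by (simp add: algebra_simps mult_2)
  have oc': "y*y + poly (hp W) x * y - poly (Fp W) x = 0" using oc by (simp add: on_curve_iff)
  have "poly G1 x * poly G1 x * (wa1 W * y - (3*x^2 + 2*wa2 W*x + wa4 W)) = 0"
    using e hx oc' ev by algebra
  then have "poly G1 x = 0" using sm by simp
  then show ?thesis using ev by simp
qed


lemma fmul_N0: "fmul W (A, B) (N, 0) = (N * A, N * B)"
  by (simp add: algebra_simps)

lemma ordf_ne1: "ordf f \<noteq> 1"
  by (cases f) auto

lemma lin_dvd_sq_prod: "(q::'a::comm_semiring_1) dvd a \<Longrightarrow> q dvd b \<Longrightarrow> q^2 dvd a * b"
  unfolding power2_eq_square by (rule mult_dvd_mono)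

lemma delta_core:
  assumes ell: "elliptic W" and fin: "finite Z" and oc: "\<forall>z\<in>Z. on_curve W z"
    and f0nz: "f0 \<noteq> (0, 0)" and f0o: "ordf f0 \<le> card Z" and f0z: "\<forall>z\<in>Z. evf f0 z = 0"
    and f1nz: "f1 \<noteq> (0, 0)" and f1o: "ordf f1 = card Z + 1" and f1z: "\<forall>z\<in>Z. evf f1 z = 0"
  shows False
proof -
  define N0 where "N0 = fnorm W f0"
  obtain A0 B0 where f0: "f0 = (A0, B0)" by (cases f0)
  obtain A1 B1 where f1: "f1 = (A1, B1)" by (cases f1)
  have N0nz: "N0 \<noteq> 0" and dN0: "degree N0 = ordf f0"
    using deg_norm0[of A0 B0 W] f0nz f0 N0_def by auto
  have PN: "PiZ Z dvd N0" unfolding N0_def by (rule PiZ_dvd_norm[OF fin oc f0z])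
  have dP: "degree (PiZ Z) = card Z" by (rule degree_PiZ[OF fin])
  obtain r where r: "N0 = PiZ Z * r" using PN by (auto elim!: dvdE)
  have rnz: "r \<noteq> 0" "PiZ Z \<noteq> 0" using r N0nz by auto
  have "degree N0 = card Z + degree r" using r rnz dP by (simp add: degree_mult_eq)
  then have dr: "degree r = 0" and dN0': "degree N0 = card Z" using dN0 f0o by auto
  obtain c where c: "r = [:c:]" "c \<noteq> 0" using dr rnz by (metis degree_eq_zeroE pCons_0_0)
  have PNe: "PiZ Z = N0 * [:inverse c:]" using r c by (simp add: mult.assoc)
  have NP: "N0 dvd PiZ Z" unfolding PNe by (rule dvd_triv_left)
  define G0 where "G0 = fst (fmul W f1 (fconj W f0))"
  define G1 where "G1 = snd (fmul W f1 (fconj W f0))"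
  have Geq: "fmul W f1 (fconj W f0) = (G0, G1)" by (simp add: G0_def G1_def)
  have PG: "PiZ Z dvd G0 \<and> PiZ Z dvd G1"
  proof -
    have "\<forall>x\<in>fst ` Z. [:-x, 1:] ^ mlt Z x dvd G0 \<and> [:-x, 1:] ^ mlt Z x dvd G1"
    proof
      fix x assume x: "x \<in> fst ` Z"
      show "[:-x, 1:] ^ mlt Z x dvd G0 \<and> [:-x, 1:] ^ mlt Z x dvd G1"
      proof (cases rule: mlt_cases[OF fin oc x])
        case (1 z)
        obtain y where z: "z = (x, y)" using 1 by (cases z) auto
        have ocz: "on_curve W z" using oc 1 by auto
        have ev0: "evf (G0, G1) z = 0"
          using evf_fmul[OF ocz, of f1 "fconj W f0"] f1z 1 Geq by simp
        show ?thesis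
        proof (cases "cpt W z = z")
          case False
          have ev1: "evf (G0, G1) (cpt W z) = 0"
            using evf_fmul[OF cpt_on_curve[OF ocz], of f1 "fconj W f0"] f0z 1 Geq
            by (simp add: evf_fconj)
          have ne: "y \<noteq> - y - poly (hp W) x" using False z by auto
          have "evf (G0, G1) (x, y) = 0" "evf (G0, G1) (x, - y - poly (hp W) x) = 0"
            using ev0 ev1 z by auto
          from both_zero[OF this ne] show ?thesis using 1 by simp
        next
          case True
          have tt: "- y - poly (hp W) x = y" using True z by simp
          have ocz': "on_curve W (x, y)" using ocz z by simp
          have "poly (fnorm W f1) x = 0" using poly_fnorm[OF ocz, of f1] f1z 1 z by simp
          then have d1: "[:-x, 1:] dvd fnorm W f1" by (simp add: poly_eq_0_iff_dvd)
          have "poly (fnorm W f0) x = 0" using poly_fnorm[OF ocz, of f0] f0z 1 z by simp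
          then have d0: "[:-x, 1:] dvd fnorm W f0" by (simp add: poly_eq_0_iff_dvd)
          have "fnorm W (G0, G1) = fnorm W f1 * fnorm W f0"
            using fnorm_fmul[of W f1 "fconj W f0"] Geq by (simp only: fnorm_fconj)
          then have dd: "[:-x, 1:]^2 dvd fnorm W (G0, G1)" using lin_dvd_sq_prod[OF d1 d0] by simp
          have "poly G0 x + poly G1 x * y = 0" using ev0 z by simp
          from two_tors_zero[OF ell ocz' tt this dd] show ?thesis using 1
            by (simp add: poly_eq_0_iff_dvd)
        qed
      next
        case (2 z)
        obtain y where z: "z = (x, y)" using 2 by (cases z) auto
        have ne: "y \<noteq> - y - poly (hp W) x" using 2 z by auto
        have e0: "evf (A0, B0) (x, y) = 0" "evf (A0, B0) (x, - y - poly (hp W) x) = 0"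
          using f0z 2 z f0 by auto
        have e1: "evf (A1, B1) (x, y) = 0" "evf (A1, B1) (x, - y - poly (hp W) x) = 0"
          using f1z 2 z f1 by auto
        obtain a0 b0 a1 b1 where ab: "A0 = [:-x, 1:] * a0" "B0 = [:-x, 1:] * b0"
          "A1 = [:-x, 1:] * a1" "B1 = [:-x, 1:] * b1"
          using both_zero[OF e0 ne] both_zero[OF e1 ne] by (auto elim!: dvdE)
        have gen: "\<And>q::'a poly. fmul W (q*a1, q*b1) (fconj W (q*a0, q*b0)) =
           (q^2 * fst (fmul W (a1, b1) (fconj W (a0, b0))), q^2 * snd (fmul W (a1, b1) (fconj W (a0, b0))))"
          by simp algebra
        have "(G0, G1) = ([:-x, 1:]^2 * fst (fmul W (a1, b1) (fconj W (a0, b0))),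
                          [:-x, 1:]^2 * snd (fmul W (a1, b1) (fconj W (a0, b0))))"
          using Geq gen[of "[:-x, 1:]"] unfolding f0 f1 ab by simp
        then show ?thesis using 2 by auto
      qed
    qed
    then show ?thesis using PiZ_dvd[OF fin, of G0] PiZ_dvd[OF fin, of G1] by auto
  qed
  then have "N0 dvd G0" "N0 dvd G1" using NP dvd_trans by blast+
  then obtain H0 H1 where H: "G0 = N0 * H0" "G1 = N0 * H1" by (auto elim!: dvdE)
  have "fmul W (G0, G1) f0 = fmul W f1 (fmul W (fconj W f0) f0)"
    using Geq fmul_assoc[of W f1 "fconj W f0" f0] by simp
  also have "\<dots> = fmul W f1 (N0, 0)"
    using fmul_comm[of W "fconj W f0" f0] fmul_fconj_self[of W f0] N0_def by simp
  also have "\<dots> = (N0 * A1, N0 * B1)" using f1 fmul_N0 by simp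
  finally have e1: "fmul W (G0, G1) f0 = (N0 * A1, N0 * B1)" .
  have e2: "fmul W (G0, G1) f0 = (N0 * fst (fmul W (H0, H1) f0), N0 * snd (fmul W (H0, H1) f0))"
    unfolding H by (rule fmul_scal)
  have "A1 = fst (fmul W (H0, H1) f0)" "B1 = snd (fmul W (H0, H1) f0)"
    using e1 e2 N0nz by auto
  then have f1H: "f1 = fmul W (H0, H1) f0" using f1 by (simp add: prod_eq_iff)
  have Hnz: "(H0, H1) \<noteq> (0, 0)"
  proof
    assume "(H0, H1) = (0, 0)"
    then have "f1 = (0, 0)" using f1H f0 by simp
    then show False using f1nz by simp
  qed
  have "fnorm W f1 = fnorm W (H0, H1) * N0" unfolding f1H N0_def by (rule fnorm_fmul)
  moreover have "fnorm W f1 \<noteq> 0" "degree (fnorm W f1) = ordf f1"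
    using deg_norm0[of A1 B1 W] f1nz f1 by auto
  moreover have "fnorm W (H0, H1) \<noteq> 0" "degree (fnorm W (H0, H1)) = ordf (H0, H1)"
    using deg_norm0[OF Hnz, of W] by auto
  ultimately have "ordf f1 = ordf (H0, H1) + card Z"
    using N0nz dN0' by (simp add: degree_mult_eq)
  then have "ordf (H0, H1) = 1" using f1o by simp
  then show False using ordf_ne1 by blast
qed

fun inV :: "nat \<Rightarrow> 'a::field fn \<Rightarrow> bool" where
  "inV j (A, B) \<longleftrightarrow> 2 * degree A \<le> j \<and> (B = 0 \<or> 2 * degree B + 3 \<le> j)"

fun lc :: "nat \<Rightarrow> 'a::field fn \<Rightarrow> 'a" where
  "lc j (A, B) = (if even j then coeff A (j div 2) else coeff B ((j - 3) div 2))"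

fun lcomb :: "'a::field \<Rightarrow> 'a fn \<Rightarrow> 'a \<Rightarrow> 'a fn \<Rightarrow> 'a fn" where
  "lcomb a (A, B) b (C, D) = (smult a A + smult b C, smult a B + smult b D)"

lemma inV_ordf: "inV j f \<Longrightarrow> ordf f \<le> j"
  by (cases f) auto

lemma lc_lcomb: "lc j (lcomb a f b g) = a * lc j f + b * lc j g"
  by (cases f, cases g) auto

lemma evf_lcomb: "evf (lcomb a f b g) z = a * evf f z + b * evf g z"
  by (cases f, cases g, cases z) (auto simp: algebra_simps)

lemma lcomb_10: "lcomb 1 f 0 g = f"
  by (cases f, cases g) auto

lemma inV_lcomb:
  assumes "inV j f" "inV j g"
  shows "inV j (lcomb a f b g)"
proof -
  obtain A B where f: "f = (A, B)" by (cases f)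
  obtain C D where g: "g = (C, D)" by (cases g)
  have "degree (smult a A + smult b C) \<le> max (degree A) (degree C)"
    by (intro degree_add_le) (auto intro: order_trans[OF degree_smult_le])
  then have 1: "2 * degree (smult a A + smult b C) \<le> j" using assms f g by auto
  have 2: "smult a B + smult b D = 0 \<or> 2 * degree (smult a B + smult b D) + 3 \<le> j"
  proof (cases "B = 0")
    case True
    then show ?thesis using assms g f degree_smult_le[of b D] by (cases "D = 0") auto
  next
    case Bnz: False
    show ?thesis
    proof (cases "D = 0")
      case True
      then show ?thesis using assms g f degree_smult_le[of a B] by auto
    next
      case False
      have "degree (smult a B + smult b D) \<le> max (degree B) (degree D)"
        by (intro degree_add_le) (auto intro: order_trans[OF degree_smult_le])
      then show ?thesis using assms f g Bnz False by auto
    qed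
  qed
  show ?thesis using 1 2 f g by simp
qed

lemma lc_drop:
  assumes "1 \<le> j" "inV j f" "lc j f = 0"
  shows "inV (j - 1) f"
proof -
  obtain A B where f: "f = (A, B)" by (cases f)
  show ?thesis
  proof (cases "even j")
    case True
    have cA: "coeff A (j div 2) = 0" using assms f True by simp
    have "2 * degree A \<le> j" using assms f by simp
    moreover have "degree A \<noteq> j div 2"
    proof
      assume d: "degree A = j div 2"
      then have "A \<noteq> 0" using True assms(1) by auto
      then have "coeff A (degree A) \<noteq> 0" by simp
      then show False using cA d by simp
    qed
    ultimately have a: "2 * degree A \<le> j - 1" using True by presburger
    have "B = 0 \<or> 2 * degree B + 3 \<le> j" using assms f by simp
    moreover have "2 * degree B + 3 \<noteq> j" using True by presburger
    ultimately have "B = 0 \<or> 2 * degree B + 3 \<le> j - 1" by auto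
    then show ?thesis using a f by simp
  next
    case False
    have "2 * degree A \<le> j" using assms f by simp
    then have a: "2 * degree A \<le> j - 1" using False by presburger
    have "B = 0 \<or> 2 * degree B + 3 \<le> j - 1"
    proof (cases "B = 0")
      case Bnz: False
      have j3: "2 * degree B + 3 \<le> j" using assms f Bnz by simp
      have cB: "coeff B ((j - 3) div 2) = 0" using assms f False by simp
      have "degree B \<noteq> (j - 3) div 2"
      proof
        assume d: "degree B = (j - 3) div 2"
        have "coeff B (degree B) \<noteq> 0" using Bnz by simp
        then show False using cB d by simp
      qed
      then have "2 * degree B + 3 \<le> j - 1" using j3 False by presburger
      then show ?thesis by simp
    qed simp
    then show ?thesis using a f by simp
  qed
qed

lemma lc_ord:
  assumes "inV j f" "lc j f \<noteq> 0"
  shows "ordf f = j"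
proof -
  obtain A B where f: "f = (A, B)" by (cases f)
  have le: "ordf f \<le> j" using inV_ordf[OF assms(1)] .
  show ?thesis
  proof (cases "even j")
    case True
    then have "coeff A (j div 2) \<noteq> 0" using assms f by simp
    then have "j div 2 \<le> degree A" by (rule le_degree)
    then have "j \<le> 2 * degree A" using True by presburger
    moreover have "2 * degree A \<le> ordf f" using f by auto
    ultimately show ?thesis using le by simp
  next
    case False
    then have cB: "coeff B ((j - 3) div 2) \<noteq> 0" using assms f by simp
    then have Bnz: "B \<noteq> 0" by auto
    then have j3: "2 * degree B + 3 \<le> j" using assms f by simp
    have "(j - 3) div 2 \<le> degree B" using cB by (rule le_degree)
    then have "j \<le> 2 * degree B + 3" using False j3 by presburger
    moreover have "2 * degree B + 3 \<le> ordf f" using f Bnz by auto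
    ultimately show ?thesis using le by simp
  qed
qed

lemma lc_zero_fn: "lc j (0, 0) = 0"
  by simp

lemma F2core:
  assumes ell: "elliptic W" and fin: "finite Z" and oc: "\<forall>z\<in>Z. on_curve W z"
    and m1: "1 \<le> card Z"
    and V1: "inV (card Z + 1) f1" and V2: "inV (card Z + 1) f2"
    and z1: "\<forall>z\<in>Z. evf f1 z = 0" and z2: "\<forall>z\<in>Z. evf f2 z = 0"
    and ind: "\<forall>a b. (a, b) \<noteq> (0, 0) \<longrightarrow> lcomb a f1 b f2 \<noteq> (0, 0)"
  shows False
proof -
  define m where "m = card Z"
  have zc: "\<And>g j. g \<noteq> (0, 0) \<Longrightarrow> inV j g \<Longrightarrow> \<forall>z\<in>Z. evf g z = 0 \<Longrightarrow> m \<le> j"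
    using zero_count[OF _ fin oc] inV_ordf m_def by (metis order_trans)
  have zl: "\<forall>z\<in>Z. evf (lcomb a f1 b f2) z = 0" for a b
    using z1 z2 by (simp add: evf_lcomb)
  define l1 where "l1 = lc (m + 1) f1"
  define l2 where "l2 = lc (m + 1) f2"
  show False
  proof (cases "l1 = 0 \<and> l2 = 0")
    case True
    have W1: "inV m f1" using lc_drop[of "m+1" f1] V1 True l1_def m_def by simp
    have W2: "inV m f2" using lc_drop[of "m+1" f2] V2 True l2_def m_def by simp
    define k1 where "k1 = lc m f1"
    define k2 where "k2 = lc m f2"
    show False
    proof (cases "k1 = 0 \<and> k2 = 0")
      case True
      have "inV (m - 1) f1" using lc_drop[of m f1] W1 True k1_def m1 m_def by simp
      moreover have "f1 \<noteq> (0, 0)" using ind[rule_format, of 1 0] by (simp add: lcomb_10)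
      ultimately have "m \<le> m - 1" using zc z1 by blast
      then show False using m1 m_def by simp
    next
      case False
      define g where "g = lcomb k2 f1 (- k1) f2"
      have gnz: "g \<noteq> (0, 0)" unfolding g_def using ind False by auto
      have "lc m g = 0" unfolding g_def lc_lcomb k1_def k2_def by (simp add: algebra_simps)
      then have "inV (m - 1) g" using lc_drop[of m g] inV_lcomb[OF W1 W2] m1 m_def g_def by simp
      then have "m \<le> m - 1" using zc[OF gnz] zl g_def by blast
      then show False using m1 m_def by simp
    qed
  next
    case False
    define g where "g = lcomb l2 f1 (- l1) f2"
    have gnz: "g \<noteq> (0, 0)" unfolding g_def using ind False by auto
    have "lc (m + 1) g = 0" unfolding g_def lc_lcomb l1_def l2_def by (simp add: algebra_simps)
    then have gV: "inV m g" using lc_drop[of "m + 1" g] inV_lcomb[OF V1 V2] m_def g_def by simp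
    obtain f' where f': "inV (m + 1) f'" "lc (m + 1) f' \<noteq> 0" "\<forall>z\<in>Z. evf f' z = 0"
      using False V1 V2 z1 z2 l1_def l2_def m_def by blast
    have f'nz: "f' \<noteq> (0, 0)"
    proof
      assume "f' = (0, 0)"
      then have "lc (m + 1) f' = 0" by (simp only: lc.simps coeff_0 if_cancel)
      then show False using f'(2) by simp
    qed
    have "ordf f' = m + 1" by (rule lc_ord[OF f'(1,2)])
    moreover have "ordf g \<le> m" using inV_ordf[OF gV] .
    ultimately show False
      using delta_core[OF ell fin oc gnz _ _ f'nz _ f'(3)] zl g_def m_def by simp
  qed
qed

lemma subspace_kernels:
  fixes U :: "('a::field ^ 'n) set"
  assumes U: "vec.subspace U"
    and lin: "\<And>s x y. s \<in> S \<Longrightarrow> \<phi> s (x + y) = \<phi> s x + \<phi> s y"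
    and hom: "\<And>s c x. s \<in> S \<Longrightarrow> \<phi> s (c *s x) = c * \<phi> s x"
  shows "vec.subspace {u\<in>U. \<forall>s\<in>S. \<phi> s u = 0}"
proof -
  have z: "\<phi> s 0 = 0" if "s \<in> S" for s
    using hom[OF that, of 0 0] by simp
  show ?thesis
    unfolding vec.subspace_def
    using U lin hom z by (auto simp: vec.subspace_def)
qed

lemma dim_hyper:
  fixes U :: "('a::field ^ 'n) set"
  assumes U: "vec.subspace U"
    and lin: "\<And>x y. \<phi> (x + y) = \<phi> x + \<phi> y"
    and hom: "\<And>c x. \<phi> (c *s x) = c * \<phi> x"
  shows "vec.dim U \<le> vec.dim {u\<in>U. \<phi> u = 0} + 1"
proof (cases "\<forall>u\<in>U. \<phi> u = 0")
  case True
  then have "{u\<in>U. \<phi> u = 0} = U" by auto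
  then show ?thesis by simp
next
  case False
  then obtain c where c: "c \<in> U" "\<phi> c \<noteq> 0" by auto
  define U0 where "U0 = {u\<in>U. \<phi> u = 0}"
  have "U \<subseteq> vec.span (insert c U0)"
  proof
    fix u assume u: "u \<in> U"
    define a where "a = \<phi> u / \<phi> c"
    have e: "u - a *s c = u + (- a) *s c" by (simp add: vec.scale_minus_left)
    have "\<phi> (u + (- a) *s c) = \<phi> u + (- a) * \<phi> c" by (simp only: lin hom)
    then have "\<phi> (u - a *s c) = \<phi> u - a * \<phi> c" unfolding e by simp
    also have "\<dots> = 0" using c by (simp add: a_def)
    finally have "u - a *s c \<in> U0"
      using U u c by (simp add: U0_def vec.subspace_diff vec.subspace_scale)
    then have "u - a *s c \<in> vec.span U0" by (rule vec.span_base)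
    then show "u \<in> vec.span (insert c U0)"
      by (auto simp: vec.span_breakdown_eq)
  qed
  then have "vec.dim U \<le> vec.dim (vec.span (insert c U0))" by (rule vec.dim_subset)
  also have "\<dots> = vec.dim (insert c U0)" by simp
  also have "\<dots> \<le> vec.dim U0 + 1" by (simp add: vec.dim_insert)
  finally show ?thesis by (simp add: U0_def)
qed

lemma dim_kernels:
  fixes U :: "('a::field ^ 'n) set"
  assumes U: "vec.subspace U" and fin: "finite S"
    and lin: "\<And>s x y. \<phi> s (x + y) = \<phi> s x + \<phi> s y"
    and hom: "\<And>s c x. \<phi> s (c *s x) = c * \<phi> s x"
  shows "vec.dim U \<le> vec.dim {u\<in>U. \<forall>s\<in>S. \<phi> s u = 0} + card S"
  using fin
proof (induction S rule: finite_induct)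
  case empty then show ?case by simp
next
  case (insert s S)
  define US where "US = {u\<in>U. \<forall>s\<in>S. \<phi> s u = 0}"
  have sub: "vec.subspace US" unfolding US_def by (rule subspace_kernels[OF U lin hom])
  have eq: "{u\<in>U. \<forall>t\<in>insert s S. \<phi> t u = 0} = {u\<in>US. \<phi> s u = 0}"
    by (auto simp: US_def)
  have "vec.dim US \<le> vec.dim {u\<in>US. \<phi> s u = 0} + 1"
    by (rule dim_hyper[OF sub lin hom])
  then show ?case using insert eq US_def by simp
qed

lemma dual_dim:
  fixes S :: "('a::field ^ 'n) set"
  assumes "finite S"
  shows "CARD('n) \<le> vec.dim {u. \<forall>s\<in>S. dot u s = 0} + card S"
proof -
  have "vec.dim (UNIV :: ('a ^ 'n) set) \<le> vec.dim {u\<in>UNIV. \<forall>s\<in>S. dot u s = 0} + card S"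
    by (rule dim_kernels[OF vec.subspace_UNIV assms])
       (auto simp: dot_def sum.distrib algebra_simps sum_distrib_left)
  then show ?thesis by (simp only: vec_dim_card simp_thms Collect_mem_eq mem_Collect_eq UNIV_I)
qed

lemma dim_coords:
  fixes U :: "('a::field ^ 'n) set"
  assumes "vec.subspace U" "finite S"
  shows "vec.dim U \<le> vec.dim {u\<in>U. \<forall>s\<in>S. u $ s = 0} + card S"
  by (rule dim_kernels[OF assms]) auto

lemma info_set:
  fixes C :: "('a::field ^ 'n) set"
  assumes "vec.subspace C"
  shows "\<exists>I. vec.dim C \<le> card I \<and> (\<forall>t. \<exists>c\<in>C. \<forall>i\<in>I. c $ i = t $ i)"
  using assms
proof (induction "vec.dim C" arbitrary: C rule: less_induct)
  case less
  show ?case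
  proof (cases "\<forall>c\<in>C. c = 0")
    case True
    then have "C \<subseteq> {0}" by auto
    then have "vec.dim C \<le> vec.dim {0::'a^'n}" by (rule vec.dim_subset)
    then have "vec.dim C = 0" by simp
    then show ?thesis using less.prems vec.subspace_0 by (intro exI[of _ "{}"]) auto
  next
    case False
    then obtain c where c: "c \<in> C" "c \<noteq> 0" by auto
    then obtain i where i: "c $ i \<noteq> 0" by (auto simp: vec_eq_iff)
    define C' where "C' = {u\<in>C. \<forall>s\<in>{i}. u $ s = 0}"
    have subC': "vec.subspace C'" unfolding C'_def
      by (rule subspace_kernels[OF less.prems]) auto
    have dimle: "vec.dim C \<le> vec.dim C' + 1"
      using dim_coords[OF less.prems, of "{i}"] by (simp add: C'_def)
    have ps: "C' \<subset> C" using c i by (auto simp: C'_def)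
    have sp1: "vec.span C' = C'" using subC' by (simp add: vec.span_eq_iff)
    have sp2: "vec.span C = C" using less.prems by (simp add: vec.span_eq_iff)
    have "vec.span C' \<subset> vec.span C" unfolding sp1 sp2 by (rule ps)
    then have "vec.dim C' < vec.dim C" by (rule vec.dim_psubset)
    from less.hyps[OF this subC'] obtain I' where
      I': "vec.dim C' \<le> card I'" "\<forall>t. \<exists>c\<in>C'. \<forall>i\<in>I'. c $ i = t $ i" by blast
    have iI: "i \<notin> I'"
    proof
      assume "i \<in> I'"
      obtain c' where "c' \<in> C'" "\<forall>j\<in>I'. c' $ j = ((\<chi> j. 1) :: 'a ^ 'n) $ j" using I'(2) by blast
      then show False using \<open>i \<in> I'\<close> by (auto simp: C'_def)
    qed
    have finI': "finite I'" by simp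
    show ?thesis
    proof (intro exI[of _ "insert i I'"] conjI allI)
      show "vec.dim C \<le> card (insert i I')" using dimle I'(1) iI finI' by simp
    next
      fix t :: "'a ^ 'n"
      define a where "a = t $ i / c $ i"
      obtain c' where c': "c' \<in> C'" "\<forall>j\<in>I'. c' $ j = (t - a *s c) $ j" using I'(2) by blast
      have w: "c' + a *s c \<in> C" using c' c less.prems
        by (simp add: C'_def vec.subspace_add vec.subspace_scale)
      have "\<forall>j\<in>insert i I'. (c' + a *s c) $ j = t $ j"
        using c' i by (auto simp: a_def C'_def)
      then show "\<exists>c\<in>C. \<forall>j\<in>insert i I'. c $ j = t $ j" using w by blast
    qed
  qed
qed

definition evm :: "('n::finite \<Rightarrow> 'a::field \<times> 'a) \<Rightarrow> nat \<times> nat \<Rightarrow> 'a ^ 'n" where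
  "evm P m = (\<chi> i. fst (P i) ^ fst m * snd (P i) ^ snd m)"

definition evc :: "('n::finite \<Rightarrow> 'a::field \<times> 'a) \<Rightarrow> nat \<Rightarrow> (nat \<times> nat \<Rightarrow> 'a) \<Rightarrow> 'a ^ 'n" where
  "evc P k c = (\<chi> i. \<Sum>(a, b)\<in>LkO_monomials k. c (a, b) * fst (P i) ^ a * snd (P i) ^ b)"

definition fnc :: "(nat \<times> nat \<Rightarrow> 'a::field) \<Rightarrow> nat \<Rightarrow> 'a fn" where
  "fnc c k = ((\<Sum>i\<in>{i. 2*i \<le> k}. monom (c (i, 0)) i), (\<Sum>i\<in>{i. 2*i + 3 \<le> k}. monom (c (i, 1)) i))"

lemma code_L_eq: "code_L P k = range (evc P k)"
  unfolding code_L_def evc_def by auto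

lemma set1_eq: "{i::nat. 2*i \<le> k} = {..< k div 2 + 1}" by auto
lemma set2_eq: "{i::nat. 2*i + 3 \<le> k} = {..< (k - 1) div 2}" by auto

lemma M_eq: "LkO_monomials k = (\<lambda>i. (i, 0)) ` {i. 2*i \<le> k} \<union> (\<lambda>i. (i, 1)) ` {i. 2*i + 3 \<le> k}"
  unfolding LkO_monomials_def
  by (auto simp: image_iff le_Suc_eq)

lemma finite_M[simp]: "finite (LkO_monomials k)"
  unfolding M_eq set1_eq set2_eq by simp

lemma card_M: "1 \<le> k \<Longrightarrow> card (LkO_monomials k) = k"
proof -
  assume k: "1 \<le> k"
  have "card (LkO_monomials k) = card ((\<lambda>i. (i, 0::nat)) ` {..< k div 2 + 1}) + card ((\<lambda>i. (i, 1::nat)) ` {..< (k - 1) div 2})"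
    unfolding M_eq set1_eq set2_eq by (rule card_Un_disjoint) auto
  also have "\<dots> = (k div 2 + 1) + (k - 1) div 2"
    by (simp add: card_image inj_on_def)
  also have "\<dots> = k" using k by presburger
  finally show ?thesis .
qed

lemma M_mono: "k1 \<le> k2 \<Longrightarrow> LkO_monomials k1 \<subseteq> LkO_monomials k2"
  unfolding LkO_monomials_def by auto

lemma sum_M_eq:
  "(\<Sum>(a, b)\<in>LkO_monomials k. c (a, b) * x ^ a * y ^ b) = evf (fnc c k) (x, y)"
proof -
  have "(\<Sum>(a, b)\<in>LkO_monomials k. c (a, b) * x ^ a * y ^ b) =
        (\<Sum>m\<in>(\<lambda>i. (i, 0)) ` {i. 2*i \<le> k}. (case m of (a, b) \<Rightarrow> c (a, b) * x ^ a * y ^ b)) +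
        (\<Sum>m\<in>(\<lambda>i. (i, 1)) ` {i. 2*i + 3 \<le> k}. (case m of (a, b) \<Rightarrow> c (a, b) * x ^ a * y ^ b))"
    unfolding M_eq by (rule sum.union_disjoint) (auto simp: set1_eq set2_eq)
  also have "\<dots> = (\<Sum>i\<in>{i. 2*i \<le> k}. c (i, 0) * x ^ i) + (\<Sum>i\<in>{i. 2*i + 3 \<le> k}. c (i, 1) * x ^ i * y)"
    by (simp add: sum.reindex inj_on_def)
  also have "\<dots> = evf (fnc c k) (x, y)"
    by (simp add: fnc_def poly_sum poly_monom sum_distrib_right)
  finally show ?thesis .
qed

lemma evc_nth: "evc P k c $ i = evf (fnc c k) (P i)"
  unfolding evc_def using sum_M_eq[where c=c and k=k and x="fst (P i)" and y="snd (P i)"] by simp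

lemma inV_fnc: "inV k (fnc c k)"
proof -
  have dA: "degree (\<Sum>i\<in>{i. 2*i \<le> k}. monom (c (i, 0)) i) \<le> k div 2"
    by (rule degree_sum_le) (auto simp: set1_eq intro: order_trans[OF degree_monom_le])
  have dB: "(\<Sum>i\<in>{i. 2*i + 3 \<le> k}. monom (c (i, 1)) i) = 0 \<or>
            2 * degree (\<Sum>i\<in>{i. 2*i + 3 \<le> k}. monom (c (i, 1)) i) + 3 \<le> k"
  proof (cases "k \<ge> 3")
    case True
    have "degree (\<Sum>i\<in>{i. 2*i + 3 \<le> k}. monom (c (i, 1)) i) \<le> (k - 3) div 2"
      by (rule degree_sum_le) (auto simp: set2_eq intro: order_trans[OF degree_monom_le])
    then have "2 * degree (\<Sum>i\<in>{i. 2*i + 3 \<le> k}. monom (c (i, 1)) i) + 3 \<le> k" using True by presburger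
    then show ?thesis by simp
  next
    case False
    then have "{i. 2*i + 3 \<le> k} = {}" by auto
    then show ?thesis by simp
  qed
  have "2 * degree (\<Sum>i\<in>{i. 2*i \<le> k}. monom (c (i, 0)) i) \<le> k" using dA by presburger
  then show ?thesis using dB by (simp add: fnc_def)
qed

lemma fnc_zero:
  assumes "fnc c k = (0, 0)" "m \<in> LkO_monomials k"
  shows "c m = 0"
proof -
  obtain a b where m: "m = (a, b)" by (cases m)
  have b1: "b \<le> 1" using assms(2) m by (simp add: LkO_monomials_def)
  show ?thesis
  proof (cases "b = 0")
    case True
    have ak: "a \<in> {i. 2*i \<le> k}" using assms(2) m True by (simp add: LkO_monomials_def)
    have "coeff (\<Sum>i\<in>{i. 2*i \<le> k}. monom (c (i, 0)) i) a = c (a, 0)"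
      unfolding coeff_sum coeff_monom using ak by (simp add: set1_eq)
    then show ?thesis using assms(1) m True by (simp add: fnc_def)
  next
    case False
    then have b: "b = 1" using b1 by simp
    have ak: "a \<in> {i. 2*i + 3 \<le> k}" using assms(2) m b by (simp add: LkO_monomials_def)
    have "coeff (\<Sum>i\<in>{i. 2*i + 3 \<le> k}. monom (c (i, 1)) i) a = c (a, 1)"
      unfolding coeff_sum coeff_monom using ak by (simp add: set2_eq)
    then show ?thesis using assms(1) m b by (simp add: fnc_def)
  qed
qed

lemma evc_sum: "evc P k c = (\<Sum>m\<in>LkO_monomials k. c m *s evm P m)"
  by (simp add: evc_def evm_def vec_eq_iff case_prod_beta mult.assoc)

lemma evm_in: "m \<in> LkO_monomials k \<Longrightarrow> evm P m \<in> code_L P k"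
proof -
  assume m: "m \<in> LkO_monomials k"
  have "evc P k (\<lambda>m'. if m' = m then 1 else 0) = evm P m"
    unfolding evc_sum using m by (simp add: if_distrib[of "\<lambda>a. a *s _"] sum.delta cong: if_cong)
  then show ?thesis unfolding code_L_eq by (metis rangeI)
qed

lemma code_L_mono:
  assumes "k1 \<le> k2"
  shows "code_L P k1 \<subseteq> code_L P k2"
proof
  fix v assume "v \<in> code_L P k1"
  then obtain c where v: "v = evc P k1 c" unfolding code_L_eq by auto
  define c' where "c' = (\<lambda>m. if m \<in> LkO_monomials k1 then c m else 0)"
  have "evc P k2 c' = (\<Sum>m\<in>LkO_monomials k2. c' m *s evm P m)" by (rule evc_sum)
  also have "\<dots> = (\<Sum>m\<in>LkO_monomials k1. c' m *s evm P m)"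
    using M_mono[OF assms] by (intro sum.mono_neutral_right) (auto simp: c'_def)
  also have "\<dots> = evc P k1 c" unfolding evc_sum by (simp add: c'_def)
  finally show "v \<in> code_L P k2" unfolding code_L_eq v by (metis rangeI)
qed

lemma evc_add: "evc P k c1 + evc P k c2 = evc P k (\<lambda>m. c1 m + c2 m)"
  by (simp add: evc_sum sum.distrib[symmetric] vec.scale_left_distrib)

lemma evc_scale: "a *s evc P k c = evc P k (\<lambda>m. a * c m)"
  by (simp add: evc_sum vec.scale_sum_right)

lemma evc_zero: "evc P k (\<lambda>m. 0) = 0"
  by (simp add: evc_sum)

lemma code_L_subspace: "vec.subspace (code_L P k)"
  unfolding vec.subspace_def code_L_eq
proof (intro conjI ballI allI)
  have "0 = evc P k (\<lambda>m. 0)" using evc_zero by simp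
  then show "0 \<in> range (evc P k)" by (rule ssubst) (rule rangeI)
next
  fix x y assume "x \<in> range (evc P k)" "y \<in> range (evc P k)"
  then obtain c1 c2 where "x = evc P k c1" "y = evc P k c2" by auto
  then have "x + y = evc P k (\<lambda>m. c1 m + c2 m)" by (simp add: evc_add)
  then show "x + y \<in> range (evc P k)" by (rule ssubst) (rule rangeI)
next
  fix a x assume "x \<in> range (evc P k)"
  then obtain c1 where "x = evc P k c1" by auto
  then have "a *s x = evc P k (\<lambda>m. a * c1 m)" by (simp add: evc_scale)
  then show "a *s x \<in> range (evc P k)" by (rule ssubst) (rule rangeI)
qed

lemma evc_delta: "m \<in> LkO_monomials k \<Longrightarrow> evc P k (\<lambda>m'. if m' = m then a else 0) = a *s evm P m"
  unfolding evc_sum by (simp add: if_distrib[of "\<lambda>a. a *s _"] sum.delta cong: if_cong)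

lemma F1vec:
  assumes inj: "inj P" and oc: "\<forall>i. on_curve W (P i)" and c: "\<exists>m\<in>LkO_monomials k. c m \<noteq> 0"
  shows "card {i. evc P k c $ i = 0} \<le> k"
proof -
  have fnz: "fnc c k \<noteq> (0, 0)" using fnc_zero c by blast
  define Z where "Z = P ` {i. evc P k c $ i = 0}"
  have "card Z = card {i. evc P k c $ i = 0}"
    unfolding Z_def by (rule card_image) (use inj in \<open>auto simp: inj_on_def inj_def\<close>)
  moreover have "card Z \<le> ordf (fnc c k)"
    by (rule zero_count[OF fnz]) (use oc in \<open>auto simp: Z_def evc_nth\<close>)
  moreover have "ordf (fnc c k) \<le> k" by (rule inV_ordf[OF inV_fnc])
  ultimately show ?thesis by simp
qed

lemma evm_indep:
  fixes P :: "'n::finite \<Rightarrow> 'a::field \<times> 'a"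
  assumes inj: "inj P" and oc: "\<forall>i. on_curve W (P i)" and kn: "k < CARD('n)"
  shows "inj_on (evm P) (LkO_monomials k)" "vec.independent (evm P ` LkO_monomials k)"
proof -
  have allz: False if "\<exists>m\<in>LkO_monomials k. c m \<noteq> 0" "evc P k c = 0" for c
  proof -
    have "card {i. evc P k c $ i = 0} \<le> k" by (rule F1vec[OF inj oc that(1)])
    then show False using that(2) kn by simp
  qed
  show inj': "inj_on (evm P) (LkO_monomials k)"
  proof (rule inj_onI, rule ccontr)
    fix m1 m2 assume m: "m1 \<in> LkO_monomials k" "m2 \<in> LkO_monomials k" "evm P m1 = evm P m2" "m1 \<noteq> m2"
    define c where "c = (\<lambda>m'. (if m' = m1 then 1 else 0) + (if m' = m2 then -1 else (0::'a)))"
    have "evc P k c = evm P m1 + (-1) *s evm P m2"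
      unfolding c_def evc_add[symmetric] using evc_delta[OF m(1), of P 1] evc_delta[OF m(2), of P "-1"] by simp
    also have "\<dots> = 0" using m(3) by (simp add: vec.scale_minus_left)
    finally have e0: "evc P k c = 0" .
    have "c m1 \<noteq> 0" using m(4) by (simp add: c_def)
    then show False using allz[of c] e0 m(1) by blast
  qed
  show "vec.independent (evm P ` LkO_monomials k)"
  proof
    assume "vec.dependent (evm P ` LkO_monomials k)"
    then obtain u where u: "\<exists>v\<in>evm P ` LkO_monomials k. u v \<noteq> 0"
      "(\<Sum>v\<in>evm P ` LkO_monomials k. u v *s v) = 0"
      using vec.dependent_finite[of "evm P ` LkO_monomials k"] by auto
    have "(\<Sum>v\<in>evm P ` LkO_monomials k. u v *s v) = evc P k (\<lambda>m. u (evm P m))"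
      unfolding evc_sum by (simp add: sum.reindex[OF inj'])
    then show False using allz[of "\<lambda>m. u (evm P m)"] u by auto
  qed
qed

lemma dim_L:
  fixes P :: "'n::finite \<Rightarrow> 'a::field \<times> 'a"
  assumes "inj P" "\<forall>i. on_curve W (P i)" "k < CARD('n)"
  shows "card (LkO_monomials k) \<le> vec.dim (code_L P k)"
proof -
  have "card (LkO_monomials k) = card (evm P ` LkO_monomials k)"
    using evm_indep(1)[OF assms] by (simp add: card_image)
  also have "\<dots> = vec.dim (evm P ` LkO_monomials k)"
    using evm_indep(2)[OF assms] by (simp add: vec.dim_eq_card_independent)
  also have "\<dots> \<le> vec.dim (code_L P k)"
    by (rule vec.dim_subset) (auto intro: evm_in)
  finally show ?thesis .
qed

lemma two_elems:
  assumes "finite B" "2 \<le> card B"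
  obtains v1 v2 where "v1 \<in> B" "v2 \<in> B" "v1 \<noteq> v2"
proof -
  have "\<not> card B \<le> Suc 0" using assms(2) by simp
  then have "\<not> (\<forall>a1\<in>B. \<forall>a2\<in>B. a1 = a2)" using card_le_Suc0_iff_eq[OF assms(1)] by simp
  then obtain v1 v2 where "v1 \<in> B" "v2 \<in> B" "v1 \<noteq> v2" by blast
  then show ?thesis by (rule that)
qed

lemma indep_pair:
  fixes B :: "('a::field ^ 'n) set"
  assumes ind: "vec.independent B" and v: "v1 \<in> B" "v2 \<in> B" "v1 \<noteq> v2"
    and e: "a *s v1 + b *s v2 = 0"
  shows "a = 0 \<and> b = 0"
proof (rule ccontr)
  assume "\<not> (a = 0 \<and> b = 0)"
  then have "a \<noteq> 0 \<or> b \<noteq> 0" by simp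
  then show False
  proof
    assume a: "a \<noteq> 0"
    have "v1 = (- b / a) *s v2"
      using e a by (simp add: vec_eq_iff field_simps eq_neg_iff_add_eq_0)
    moreover have "(- b / a) *s v2 \<in> vec.span (B - {v1})"
      using v by (intro vec.span_scale vec.span_base) auto
    ultimately have "vec.dependent B" unfolding vec.dependent_def using v by auto
    then show False using ind by simp
  next
    assume b: "b \<noteq> 0"
    have "v2 = (- a / b) *s v1"
      using e b by (simp add: vec_eq_iff field_simps eq_neg_iff_add_eq_0)
    moreover have "(- a / b) *s v1 \<in> vec.span (B - {v2})"
      using v by (intro vec.span_scale vec.span_base) auto
    ultimately have "vec.dependent B" unfolding vec.dependent_def using v by auto
    then show False using ind by simp
  qed
qed


lemma F2vec:
  fixes P :: "'n::finite \<Rightarrow> 'a::field \<times> 'a" and w :: "'a ^ 'n"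
  assumes ell: "elliptic W" and inj: "inj P" and oc: "\<forall>i. on_curve W (P i)"
    and jn: "j < CARD('n)" and wnz: "w \<noteq> 0" and perp: "\<forall>v\<in>code_L P j. dot w v = 0"
  shows "j \<le> card {i. w $ i \<noteq> 0}"
proof (rule ccontr)
  define T where "T = {i. w $ i \<noteq> 0}"
  define m where "m = card T"
  assume "\<not> j \<le> card {i. w $ i \<noteq> 0}"
  then have mj: "m < j" by (simp add: m_def T_def)
  have finT: "finite T" by simp
  obtain t0 where t0: "t0 \<in> T" using wnz by (auto simp: T_def vec_eq_iff)
  have m1: "1 \<le> m" using t0 finT m_def by (metis One_nat_def Suc_leI card_gt_0_iff empty_iff)
  define L where "L = code_L P (m + 1)"
  have Lsub: "L \<subseteq> code_L P j" unfolding L_def by (rule code_L_mono) (use mj in simp)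
  have dimL: "m + 1 \<le> vec.dim L"
    using dim_L[OF inj oc, of "m + 1"] card_M[of "m + 1"] mj jn by (simp add: L_def)
  define K where "K = {u\<in>L. \<forall>s\<in>T - {t0}. u $ s = 0}"
  have "vec.dim L \<le> vec.dim K + card (T - {t0})"
    unfolding K_def by (rule dim_coords) (auto simp: L_def code_L_subspace)
  moreover have "card (T - {t0}) = m - 1" using t0 finT by (simp add: m_def)
  ultimately have dimK: "2 \<le> vec.dim K" using dimL m1 by linarith
  have KL: "K \<subseteq> L" by (auto simp: K_def)
  have Kz: "\<forall>v\<in>K. \<forall>t\<in>T. v $ t = 0"
  proof (intro ballI)
    fix v t assume v: "v \<in> K" and t: "t \<in> T"
    have vt0: "v $ t0 = 0"
    proof -
      have "dot w v = 0" using perp v KL Lsub by auto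
      moreover have "dot w v = w $ t0 * v $ t0 + (\<Sum>i\<in>UNIV - {t0}. w $ i * v $ i)"
        unfolding dot_def by (simp add: sum.remove)
      moreover have "(\<Sum>i\<in>UNIV - {t0}. w $ i * v $ i) = 0"
        using v by (intro sum.neutral) (auto simp: K_def T_def)
      ultimately show ?thesis using t0 by (simp add: T_def)
    qed
    show "v $ t = 0" using v vt0 t by (cases "t = t0") (auto simp: K_def)
  qed
  obtain B where B: "B \<subseteq> K" "vec.independent B" "K \<subseteq> vec.span B" "card B = vec.dim K"
    by (rule vec.basis_exists)
  have finB: "finite B" using B(2) by (rule vec.finiteI_independent)
  obtain v1 v2 where v: "v1 \<in> B" "v2 \<in> B" "v1 \<noteq> v2"
    using two_elems[OF finB] B(4) dimK by metis
  have vK: "v1 \<in> K" "v2 \<in> K" using v B by auto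
  obtain c1 where c1: "v1 = evc P (m + 1) c1" using vK KL by (auto simp: L_def code_L_eq)
  obtain c2 where c2: "v2 = evc P (m + 1) c2" using vK KL by (auto simp: L_def code_L_eq)
  define Z where "Z = P ` T"
  have cardZ: "card Z = m" unfolding Z_def m_def
    by (rule card_image) (use inj in \<open>auto simp: inj_on_def inj_def\<close>)
  have finZ: "finite Z" by (simp add: Z_def)
  have ocZ: "\<forall>z\<in>Z. on_curve W z" using oc by (auto simp: Z_def)
  have z1: "\<forall>z\<in>Z. evf (fnc c1 (m + 1)) z = 0"
    using Kz vK c1 by (auto simp: Z_def evc_nth[symmetric])
  have z2: "\<forall>z\<in>Z. evf (fnc c2 (m + 1)) z = 0"
    using Kz vK c2 by (auto simp: Z_def evc_nth[symmetric])
  have ind: "\<forall>a b. (a, b) \<noteq> (0, 0) \<longrightarrow> lcomb a (fnc c1 (m + 1)) b (fnc c2 (m + 1)) \<noteq> (0, 0)"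
  proof (intro allI impI notI)
    fix a b assume ab: "(a, b) \<noteq> (0, 0)" and l0: "lcomb a (fnc c1 (m + 1)) b (fnc c2 (m + 1)) = (0, 0)"
    have "a *s v1 + b *s v2 = 0"
    proof (subst vec_eq_iff, intro allI)
      fix i
      have "evf (lcomb a (fnc c1 (m + 1)) b (fnc c2 (m + 1))) (P i) = 0"
        using l0 by (cases "P i") simp
      then show "(a *s v1 + b *s v2) $ i = 0 $ i"
        by (simp add: evf_lcomb c1 c2 evc_nth)
    qed
    then show False using indep_pair[OF B(2) v] ab by simp
  qed
  have m1': "1 \<le> card Z" using cardZ m1 by simp
  have V1: "inV (card Z + 1) (fnc c1 (m + 1))" using cardZ inV_fnc by simp
  have V2: "inV (card Z + 1) (fnc c2 (m + 1))" using cardZ inV_fnc by simp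
  show False by (rule F2core[OF ell finZ ocZ m1' V1 V2 z1 z2 ind])
qed

lemma hamming_diff: "hamming (u::'a::ab_group_add ^ 'n::finite) c = card {i. (u - c) $ i \<noteq> 0}"
  unfolding hamming_def by (simp add: right_minus_eq)

lemma cr_upper:
  fixes C :: "('a::{field,finite} ^ 'n::finite) set"
  assumes "vec.subspace C"
  shows "covering_radius C \<le> CARD('n) - vec.dim C"
proof -
  obtain I where I: "vec.dim C \<le> card I" "\<forall>t. \<exists>c\<in>C. \<forall>i\<in>I. c $ i = t $ i"
    using info_set[OF assms] by blast
  have Cne: "C \<noteq> {}" using assms vec.subspace_0 by auto
  have "\<forall>u. Min (hamming u ` C) \<le> CARD('n) - vec.dim C"
  proof
    fix u :: "'a ^ 'n"
    obtain c where c: "c \<in> C" "\<forall>i\<in>I. c $ i = u $ i" using I(2) by blast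
    have "{i. u $ i \<noteq> c $ i} \<subseteq> UNIV - I" using c by auto
    then have "hamming u c \<le> card (UNIV - I)" unfolding hamming_def by (rule card_mono[rotated]) simp
    also have "\<dots> = CARD('n) - card I" by (simp add: card_Diff_subset)
    also have "\<dots> \<le> CARD('n) - vec.dim C" using I(1) by simp
    finally have "hamming u c \<le> CARD('n) - vec.dim C" .
    moreover have "Min (hamming u ` C) \<le> hamming u c" using c(1) by (intro Min_le) auto
    ultimately show "Min (hamming u ` C) \<le> CARD('n) - vec.dim C" by simp
  qed
  then show ?thesis unfolding covering_radius_def by (subst Max_le_iff) auto
qed

lemma cr_lower:
  fixes C :: "('a::{field,finite} ^ 'n::finite) set"
  assumes "C \<noteq> {}" "\<forall>c\<in>C. r \<le> hamming u c"
  shows "r \<le> covering_radius C"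
proof -
  have "r \<le> Min (hamming u ` C)" using assms by (subst Min_ge_iff) auto
  also have "\<dots> \<le> covering_radius C" unfolding covering_radius_def by (intro Max_ge) auto
  finally show ?thesis .
qed

lemma dot_evc: "dot u (evc P k c) = (\<Sum>m\<in>LkO_monomials k. c m * dot u (evm P m))"
  unfolding dot_def evc_sum
  by (simp add: sum_distrib_left sum_distrib_right mult.assoc mult.left_commute sum.swap[of _ UNIV])

lemma dot_diff: "dot (u - c) v = dot u v - dot c v"
  unfolding dot_def by (simp add: sum_subtractf left_diff_distrib)

definition topm :: "nat \<Rightarrow> nat \<times> nat" where
  "topm j = (if even j then (j div 2, 0) else ((j - 3) div 2, 1))"

lemma topm_in: "2 \<le> j \<Longrightarrow> topm j \<in> LkO_monomials j"
  unfolding topm_def LkO_monomials_def by (auto; presburger)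

lemma topm_notin: "2 \<le> j \<Longrightarrow> topm j \<notin> LkO_monomials (j - 1)"
  unfolding topm_def LkO_monomials_def by (auto; presburger)

lemma evc_ext:
  assumes "k1 \<le> k2"
  shows "evc P k2 (\<lambda>m. if m \<in> LkO_monomials k1 then c m else 0) = evc P k1 c"
proof -
  have "evc P k2 (\<lambda>m. if m \<in> LkO_monomials k1 then c m else 0) =
        (\<Sum>m\<in>LkO_monomials k2. (if m \<in> LkO_monomials k1 then c m else 0) *s evm P m)" by (rule evc_sum)
  also have "\<dots> = (\<Sum>m\<in>LkO_monomials k1. (if m \<in> LkO_monomials k1 then c m else 0) *s evm P m)"
    using M_mono[OF assms] by (intro sum.mono_neutral_right) auto
  also have "\<dots> = evc P k1 c" unfolding evc_sum by simp
  finally show ?thesis .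
qed

lemma card_nonzero: "card {i. (x :: 'a::zero ^ 'n::finite) $ i \<noteq> 0} = CARD('n) - card {i. x $ i = 0}"
proof -
  have "{i. x $ i \<noteq> 0} = UNIV - {i. x $ i = 0}" by auto
  then show ?thesis by (simp add: card_Diff_subset)
qed

lemma L_lower:
  fixes P :: "'n::finite \<Rightarrow> 'a::{field,finite} \<times> 'a"
  assumes inj: "inj P" and oc: "\<forall>i. on_curve W (P i)" and k2: "2 \<le> k"
  shows "CARD('n) - (k + 1) \<le> covering_radius (code_L P k)"
proof (rule cr_lower)
  show "code_L P k \<noteq> {}" unfolding code_L_eq by simp
  define t where "t = topm (k + 1)"
  have tin: "t \<in> LkO_monomials (k + 1)" and tout: "t \<notin> LkO_monomials k"
    using topm_in[of "k + 1"] topm_notin[of "k + 1"] k2 by (auto simp: t_def)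
  show "\<forall>c\<in>code_L P k. CARD('n) - (k + 1) \<le> hamming (evm P t) c"
  proof
    fix c assume "c \<in> code_L P k"
    then obtain c0 where c: "c = evc P k c0" unfolding code_L_eq by auto
    define c' where "c' = (\<lambda>m. (if m = t then 1 else 0) + (-1) * (if m \<in> LkO_monomials k then c0 m else (0::'a)))"
    have "evc P (k + 1) c' = evm P t + (-1) *s evc P k c0"
      unfolding c'_def evc_add[symmetric] evc_scale[symmetric]
      using evc_delta[OF tin, of P 1] evc_ext[of k "k + 1" P c0] by simp
    also have "\<dots> = evm P t - c" by (simp add: c vec.scale_minus_left)
    finally have e: "evm P t - c = evc P (k + 1) c'" by simp
    have "c' t \<noteq> 0" using tout by (simp add: c'_def)
    then have "card {i. evc P (k + 1) c' $ i = 0} \<le> k + 1"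
      using F1vec[OF inj oc] tin by blast
    then show "CARD('n) - (k + 1) \<le> hamming (evm P t) c"
      unfolding hamming_diff e card_nonzero by simp
  qed
qed

lemma Omega_lower:
  fixes P :: "'n::finite \<Rightarrow> 'a::{field,finite} \<times> 'a"
  assumes ell: "elliptic W" and inj: "inj P" and oc: "\<forall>i. on_curve W (P i)" and k2: "2 \<le> k"
    and kn: "k < CARD('n)"
  shows "k - 1 \<le> covering_radius (code_Omega P k)"
proof -
  have "0 \<in> code_Omega P k" by (simp add: code_Omega_def dual_code_def dot_def)
  then have ne: "code_Omega P k \<noteq> {}" by auto
  define t where "t = topm k"
  have tin: "t \<in> LkO_monomials k" and tout: "t \<notin> LkO_monomials (k - 1)"
    using topm_in[of k] topm_notin[of k] k2 by (auto simp: t_def)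
  have indep: "inj_on (evm P) (LkO_monomials k)" "vec.independent (evm P ` LkO_monomials k)"
    using evm_indep[OF inj oc kn] by auto
  obtain g :: "'a ^ 'n \<Rightarrow> 'a ^ 'n" where g: "Vector_Spaces.linear (*s) (*s) g"
    "\<forall>x\<in>evm P ` LkO_monomials k. g x = (if x = evm P t then (\<chi> j. 1) else 0)"
    using vec.linear_independent_extend[OF indep(2), where f="\<lambda>x. if x = evm P t then (\<chi> j. 1) else 0"] by blast
  define i0 :: 'n where "i0 = undefined"
  define u :: "'a ^ 'n" where "u = (\<chi> j. g (axis j 1) $ i0)"
  have dotu: "dot u x = g x $ i0" for x
  proof -
    have "g x = g (\<Sum>j\<in>UNIV. (x $ j) *s axis j 1)" by (simp add: basis_expansion)
    also have "\<dots> = (\<Sum>j\<in>UNIV. (x $ j) *s g (axis j 1))"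
      by (simp add: vec.linear_sum[OF g(1)] vec.linear_scale[OF g(1)])
    finally have "g x $ i0 = (\<Sum>j\<in>UNIV. x $ j * g (axis j 1) $ i0)" by simp
    then show ?thesis unfolding dot_def u_def by (simp add: mult.commute)
  qed
  have u0: "dot u (evm P m) = 0" if m: "m \<in> LkO_monomials (k - 1)" for m
  proof -
    have mk: "m \<in> LkO_monomials k" using m M_mono[of "k - 1" k] by auto
    have "m \<noteq> t" using m tout by auto
    then have "evm P m \<noteq> evm P t" using indep(1) mk tin by (auto simp: inj_on_def)
    then show ?thesis using g(2) mk dotu by simp
  qed
  have u1: "dot u (evm P t) = 1" using g(2) tin dotu by simp
  have main: "\<forall>c\<in>code_Omega P k. k - 1 \<le> hamming u c"
  proof
    fix c assume cC: "c \<in> code_Omega P k"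
    have cperp: "\<forall>v\<in>code_L P k. dot c v = 0" using cC by (simp add: code_Omega_def dual_code_def)
    have perp: "\<forall>v\<in>code_L P (k - 1). dot (u - c) v = 0"
    proof
      fix v assume v: "v \<in> code_L P (k - 1)"
      then obtain c0 where "v = evc P (k - 1) c0" unfolding code_L_eq by auto
      then have "dot u v = 0" by (simp add: dot_evc u0)
      moreover have "dot c v = 0" using cperp v code_L_mono[of "k - 1" k P] by auto
      ultimately show "dot (u - c) v = 0" by (simp add: dot_diff)
    qed
    have "dot (u - c) (evm P t) = 1"
      using u1 cperp evm_in[OF tin, of P] by (simp add: dot_diff)
    then have wnz: "u - c \<noteq> 0" by (auto simp: dot_def)
    have "k - 1 \<le> card {i. (u - c) $ i \<noteq> 0}"
      by (rule F2vec[OF ell inj oc _ wnz perp]) (use kn in simp)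
    then show "k - 1 \<le> hamming u c" by (simp add: hamming_diff)
  qed
  show ?thesis by (rule cr_lower[OF ne main])
qed


lemma Omega_subspace: "vec.subspace (code_Omega P k)"
proof -
  have "vec.subspace {u\<in>UNIV. \<forall>s\<in>code_L P k. dot u s = 0}"
    by (rule subspace_kernels[OF vec.subspace_UNIV])
       (auto simp: dot_def sum.distrib algebra_simps sum_distrib_left)
  moreover have "{u\<in>UNIV. \<forall>s\<in>code_L P k. dot u s = 0} = code_Omega P k"
    by (auto simp: code_Omega_def dual_code_def)
  ultimately show ?thesis by simp
qed

lemma Omega_dim:
  fixes P :: "'n::finite \<Rightarrow> 'a::field \<times> 'a"
  assumes "1 \<le> k"
  shows "CARD('n) \<le> vec.dim (code_Omega P k) + k"
proof -
  define S where "S = evm P ` LkO_monomials k"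
  have "CARD('n) \<le> vec.dim {u. \<forall>s\<in>S. dot u s = 0} + card S"
    by (rule dual_dim) (simp add: S_def)
  moreover have "card S \<le> k" using card_image_le[of "LkO_monomials k" "evm P"] card_M[OF assms]
    by (simp add: S_def)
  moreover have "vec.dim {u. \<forall>s\<in>S. dot u s = 0} \<le> vec.dim (code_Omega P k)"
  proof (rule vec.dim_subset, rule subsetI)
    fix u assume "u \<in> {u. \<forall>s\<in>S. dot u s = 0}"
    then have "\<forall>m\<in>LkO_monomials k. dot u (evm P m) = 0" by (simp add: S_def)
    then have "\<forall>v\<in>code_L P k. dot u v = 0" by (auto simp: code_L_eq dot_evc)
    then show "u \<in> code_Omega P k" by (simp add: code_Omega_def dual_code_def)
  qed
  ultimately show ?thesis by linarith
qed

theorem lemma3p1: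
  fixes W :: "'a::{field,finite} weierstrass"
    and P :: "'n::finite \<Rightarrow> 'a \<times> 'a"
    and k :: nat
    and C :: "('a ^ 'n) set"
  assumes "odd CARD('a)"
    and "elliptic W"
    and "inj P"
    and "\<forall>i. on_curve W (P i)"
    and "2 \<le> k" and "k + 2 \<le> CARD('n)"
    and "C = code_Omega P k \<or> C = code_L P k"
  shows "int (covering_radius C) = int CARD('n) - int (vec.dim C) - 1
       \<or> int (covering_radius C) = int CARD('n) - int (vec.dim C)"
proof -
  have sub: "vec.subspace C" using assms(7) Omega_subspace code_L_subspace by metis
  have dn: "vec.dim C \<le> CARD('n)" by (rule dim_subset_UNIV_cart_gen)
  have up: "covering_radius C \<le> CARD('n) - vec.dim C" by (rule cr_upper[OF sub])
  have low: "int CARD('n) - int (vec.dim C) - 1 \<le> int (covering_radius C)"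
    using assms(7)
  proof
    assume C: "C = code_Omega P k"
    have "k - 1 \<le> covering_radius C"
      unfolding C by (rule Omega_lower[OF assms(2,3,4,5)]) (use assms(6) in simp)
    moreover have "CARD('n) \<le> vec.dim C + k" unfolding C by (rule Omega_dim) (use assms(5) in simp)
    ultimately show ?thesis using assms(5) by linarith
  next
    assume C: "C = code_L P k"
    have "CARD('n) - (k + 1) \<le> covering_radius C"
      unfolding C by (rule L_lower[OF assms(3,4,5)])
    moreover have "k \<le> vec.dim C"
      using dim_L[OF assms(3,4), of k] card_M[of k] assms(5,6) C by simp
    ultimately show ?thesis using assms(6) by linarith
  qed
  show ?thesis using up low dn by linarith
qed

end
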